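(* Let $\pi$ be a probability distribution on $[K]^n$ ($K\ge2$). The Markov kernel $P_{\mathrm{R}}$ is $\pi$-reversible. Moreover, if $\pi(c)>0$ for every $c\in[K]^n$, then $P_{\mathrm{R}}$ is irreducible, aperiodic and uniformly ergodic.
   Context: Notation: $[K]=\{1,\dots,K\}$; $n_k(c)=\#\{i:c_i=k\}$; $(c_{-i},k)$ is $c$ with $c_i$ replaced by $k$; $\pi(c_i=k\mid c_{-i})=\pi((c_{-i},k))/\sum_j\pi((c_{-i},j))$. $\mathcal{K}=\{(k,k')\in[K]^2:k<k'\}$ and $p_c(k,k')=\frac{n_k(c)+n_{k'}(c)}{(K-1)n}$ for $(k,k')\in\mathcal K$. $r(c,i,k_-,k_+)=\frac{n_{k_-}(c)}{n_{k_+}(c)+1}\cdot\frac{\pi(c_i=k_+\mid c_{-i})}{\pi(c_i=k_-\mid c_{-i})}$. $P_{\mathrm{R}}$ is the kernel on $[K]^n$ that from $c$: samples $(k,k')\sim p_c$; sets $(k_-,k_+)=(k,k')$ or $(k',k)$ with probability $1/2$ each; if $n_{k_-}(c)=0$ stays at $c$; otherwise picks $i$ uniformly from $\{i':c_{i'}=k_-\}$ and moves to $(c_{-i},k_+)$ with probability $\min\{1,r(c,i,k_-,k_+)\}$, else stays at $c$. *)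

theory Defs
  imports Complex_Main "HOL-Library.FuncSet"
begin

type_synonym config = "nat \<Rightarrow> nat"

definition states :: "nat \<Rightarrow> nat \<Rightarrow> config set" where
  "states K n = PiE {..<n} (\<lambda>_. {1..K})"

definition cnt :: "nat \<Rightarrow> config \<Rightarrow> nat \<Rightarrow> nat" where
  "cnt n c k = card {i \<in> {..<n}. c i = k}"

definition cond_prob :: "nat \<Rightarrow> (config \<Rightarrow> real) \<Rightarrow> config \<Rightarrow> nat \<Rightarrow> nat \<Rightarrow> real" where
  "cond_prob K \<pi> c i k = \<pi> (c(i := k)) / (\<Sum>j\<in>{1..K}. \<pi> (c(i := j)))"

definition pairs :: "nat \<Rightarrow> (nat \<times> nat) set" where
  "pairs K = {(k, k'). k \<in> {1..K} \<and> k' \<in> {1..K} \<and> k < k'}"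

definition pc :: "nat \<Rightarrow> nat \<Rightarrow> config \<Rightarrow> nat \<Rightarrow> nat \<Rightarrow> real" where
  "pc K n c k k' = real (cnt n c k + cnt n c k') / (real (K - 1) * real n)"

definition ratio :: "nat \<Rightarrow> nat \<Rightarrow> (config \<Rightarrow> real) \<Rightarrow> config \<Rightarrow> nat \<Rightarrow> nat \<Rightarrow> nat \<Rightarrow> real" where
  "ratio K n \<pi> c i km kp =
     real (cnt n c km) / (real (cnt n c kp) + 1) * (cond_prob K \<pi> c i kp / cond_prob K \<pi> c i km)"

text \<open>Probability of moving from c to c' once the ordered pair (k_-, k_+) has been chosen.\<close>
definition move_prob :: "nat \<Rightarrow> nat \<Rightarrow> (config \<Rightarrow> real) \<Rightarrow> config \<Rightarrow> nat \<Rightarrow> nat \<Rightarrow> config \<Rightarrow> real" where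
  "move_prob K n \<pi> c km kp c' =
     (if cnt n c km = 0 then (if c' = c then 1 else 0)
      else (\<Sum>i\<in>{i \<in> {..<n}. c i = km}.
              (1 / real (cnt n c km)) *
              (min 1 (ratio K n \<pi> c i km kp) * (if c' = c(i := kp) then 1 else 0)
               + (1 - min 1 (ratio K n \<pi> c i km kp)) * (if c' = c then 1 else 0))))"

definition PR :: "nat \<Rightarrow> nat \<Rightarrow> (config \<Rightarrow> real) \<Rightarrow> config \<Rightarrow> config \<Rightarrow> real" where
  "PR K n \<pi> c c' =
     (\<Sum>(k, k')\<in>pairs K. pc K n c k k' *
        (1/2 * move_prob K n \<pi> c k k' c' + 1/2 * move_prob K n \<pi> c k' k c'))"

definition prob_dist :: "'s set \<Rightarrow> ('s \<Rightarrow> real) \<Rightarrow> bool" where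
  "prob_dist S \<pi> \<longleftrightarrow> (\<forall>x\<in>S. 0 \<le> \<pi> x) \<and> (\<Sum>x\<in>S. \<pi> x) = 1"

definition reversible :: "'s set \<Rightarrow> ('s \<Rightarrow> 's \<Rightarrow> real) \<Rightarrow> ('s \<Rightarrow> real) \<Rightarrow> bool" where
  "reversible S P \<pi> \<longleftrightarrow> (\<forall>x\<in>S. \<forall>y\<in>S. \<pi> x * P x y = \<pi> y * P y x)"

fun mpow :: "'s set \<Rightarrow> ('s \<Rightarrow> 's \<Rightarrow> real) \<Rightarrow> nat \<Rightarrow> 's \<Rightarrow> 's \<Rightarrow> real" where
  "mpow S P 0 x y = (if x = y then 1 else 0)"
| "mpow S P (Suc m) x y = (\<Sum>z\<in>S. mpow S P m x z * P z y)"

definition irreducible_chain :: "'s set \<Rightarrow> ('s \<Rightarrow> 's \<Rightarrow> real) \<Rightarrow> bool" where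
  "irreducible_chain S P \<longleftrightarrow> (\<forall>x\<in>S. \<forall>y\<in>S. \<exists>m. mpow S P m x y > 0)"

definition period :: "'s set \<Rightarrow> ('s \<Rightarrow> 's \<Rightarrow> real) \<Rightarrow> 's \<Rightarrow> nat" where
  "period S P x = Gcd {m. 1 \<le> m \<and> mpow S P m x x > 0}"

definition aperiodic_chain :: "'s set \<Rightarrow> ('s \<Rightarrow> 's \<Rightarrow> real) \<Rightarrow> bool" where
  "aperiodic_chain S P \<longleftrightarrow> (\<forall>x\<in>S. period S P x = 1)"

definition tv_dist :: "'s set \<Rightarrow> ('s \<Rightarrow> real) \<Rightarrow> ('s \<Rightarrow> real) \<Rightarrow> real" where
  "tv_dist S \<mu> \<nu> = Max ((\<lambda>A. \<bar>(\<Sum>y\<in>A. \<mu> y) - (\<Sum>y\<in>A. \<nu> y)\<bar>) ` Pow S)"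

definition uniformly_ergodic :: "'s set \<Rightarrow> ('s \<Rightarrow> 's \<Rightarrow> real) \<Rightarrow> ('s \<Rightarrow> real) \<Rightarrow> bool" where
  "uniformly_ergodic S P \<pi> \<longleftrightarrow>
     (\<exists>M \<rho>::real. 0 < M \<and> 0 \<le> \<rho> \<and> \<rho> < 1 \<and>
        (\<forall>x\<in>S. \<forall>m. tv_dist S (mpow S P m x) \<pi> \<le> M * \<rho> ^ m))"

end

theory Submission
  imports Defs
begin


lemma mpow_nonneg:
  assumes "\<And>x y. x \<in> S \<Longrightarrow> y \<in> S \<Longrightarrow> P x y \<ge> 0" "x \<in> S" "y \<in> S"
  shows "mpow S P m x y \<ge> 0"
  using assms(3) by (induction m arbitrary: y) (auto intro!: sum_nonneg mult_nonneg_nonneg assms(1))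

lemma mpow_rowsum:
  assumes "finite S" "\<And>x. x \<in> S \<Longrightarrow> (\<Sum>y\<in>S. P x y) = 1" "x \<in> S"
  shows "(\<Sum>y\<in>S. mpow S P m x y) = 1"
proof (induction m)
  case 0
  then show ?case using assms by (simp add: sum.delta)
next
  case (Suc m)
  have "(\<Sum>y\<in>S. mpow S P (Suc m) x y) = (\<Sum>z\<in>S. mpow S P m x z * (\<Sum>y\<in>S. P z y))"
    unfolding mpow.simps sum_distrib_left by (rule sum.swap)
  also have "\<dots> = (\<Sum>z\<in>S. mpow S P m x z)" using assms(2) by simp
  finally show ?case using Suc by simp
qed

lemma mpow_add:
  assumes "finite S" "y \<in> S"
  shows "mpow S P (a + b) x y = (\<Sum>z\<in>S. mpow S P a x z * mpow S P b z y)"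
  using assms(2)
proof (induction b arbitrary: y)
  case 0
  then show ?case using assms by (simp add: sum.delta if_distrib cong: if_cong)
next
  case (Suc b)
  have "mpow S P (a + Suc b) x y = (\<Sum>w\<in>S. mpow S P (a+b) x w * P w y)" by simp
  also have "\<dots> = (\<Sum>w\<in>S. (\<Sum>z\<in>S. mpow S P a x z * mpow S P b z w) * P w y)"
    using Suc by (intro sum.cong) auto
  also have "\<dots> = (\<Sum>z\<in>S. mpow S P a x z * (\<Sum>w\<in>S. mpow S P b z w * P w y))"
    unfolding sum_distrib_right sum_distrib_left mult.assoc by (rule sum.swap)
  finally show ?case by simp
qed

lemma mpow_stat:
  assumes "finite S" "\<And>y. y \<in> S \<Longrightarrow> (\<Sum>x\<in>S. \<pi> x * P x y) = \<pi> y" "y \<in> S"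
  shows "(\<Sum>x\<in>S. \<pi> x * mpow S P m x y) = \<pi> y"
  using assms(3)
proof (induction m arbitrary: y)
  case 0
  then show ?case using assms by (simp add: sum.delta if_distrib cong: if_cong)
next
  case (Suc m)
  have "(\<Sum>x\<in>S. \<pi> x * mpow S P (Suc m) x y) = (\<Sum>z\<in>S. (\<Sum>x\<in>S. \<pi> x * mpow S P m x z) * P z y)"
    unfolding mpow.simps sum_distrib_right sum_distrib_left mult.assoc by (rule sum.swap)
  also have "\<dots> = (\<Sum>z\<in>S. \<pi> z * P z y)" using Suc by (intro sum.cong) auto
  finally show ?case using assms Suc by simp
qed

lemma contraction:
  fixes v :: "'s \<Rightarrow> real" and \<delta> :: real
  assumes "finite S" "0 \<le> \<delta>" "\<And>z y. z \<in> S \<Longrightarrow> y \<in> S \<Longrightarrow> Q z y \<ge> \<delta>"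
    "\<And>z. z \<in> S \<Longrightarrow> (\<Sum>y\<in>S. Q z y) = 1" "(\<Sum>z\<in>S. v z) = 0"
  shows "(\<Sum>y\<in>S. \<bar>\<Sum>z\<in>S. v z * Q z y\<bar>) \<le> (1 - card S * \<delta>) * (\<Sum>z\<in>S. \<bar>v z\<bar>)"
proof -
  have eq: "(\<Sum>z\<in>S. v z * Q z y) = (\<Sum>z\<in>S. v z * (Q z y - \<delta>))" for y
  proof -
    have "(\<Sum>z\<in>S. v z * (Q z y - \<delta>)) = (\<Sum>z\<in>S. v z * Q z y) - (\<Sum>z\<in>S. v z) * \<delta>"
      by (simp add: algebra_simps sum_subtractf sum_distrib_right sum_distrib_left)
    then show ?thesis using assms(5) by simp
  qed
  have "(\<Sum>y\<in>S. \<bar>\<Sum>z\<in>S. v z * Q z y\<bar>) \<le> (\<Sum>y\<in>S. \<Sum>z\<in>S. \<bar>v z\<bar> * (Q z y - \<delta>))"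
  proof (intro sum_mono)
    fix y assume y: "y \<in> S"
    have "\<bar>\<Sum>z\<in>S. v z * (Q z y - \<delta>)\<bar> \<le> (\<Sum>z\<in>S. \<bar>v z * (Q z y - \<delta>)\<bar>)" by (rule sum_abs)
    also have "\<dots> = (\<Sum>z\<in>S. \<bar>v z\<bar> * (Q z y - \<delta>))"
      using assms(3) y by (intro sum.cong) (auto simp: abs_mult)
    finally show "\<bar>\<Sum>z\<in>S. v z * Q z y\<bar> \<le> (\<Sum>z\<in>S. \<bar>v z\<bar> * (Q z y - \<delta>))" using eq by simp
  qed
  also have "\<dots> = (\<Sum>z\<in>S. \<bar>v z\<bar> * (\<Sum>y\<in>S. (Q z y - \<delta>)))"
    by (subst sum.swap) (simp add: sum_distrib_left)
  also have "\<dots> = (\<Sum>z\<in>S. \<bar>v z\<bar> * (1 - card S * \<delta>))"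
    using assms(4) by (intro sum.cong) (auto simp: sum_subtractf)
  finally show ?thesis by (simp add: sum_distrib_right mult.commute)
qed

lemma unif_erg_abstract:
  assumes fin: "finite S" and nn: "\<And>x y. x \<in> S \<Longrightarrow> y \<in> S \<Longrightarrow> P x y \<ge> 0"
  and rs: "\<And>x. x \<in> S \<Longrightarrow> (\<Sum>y\<in>S. P x y) = 1"
  and pd: "prob_dist S \<pi>"
  and st: "\<And>y. y \<in> S \<Longrightarrow> (\<Sum>x\<in>S. \<pi> x * P x y) = \<pi> y"
  and N: "N \<ge> 1" and pos: "\<And>x y. x \<in> S \<Longrightarrow> y \<in> S \<Longrightarrow> mpow S P N x y > 0"
  shows "uniformly_ergodic S P \<pi>"
proof -
  have pnn: "\<And>x. x \<in> S \<Longrightarrow> \<pi> x \<ge> 0" and psum: "(\<Sum>x\<in>S. \<pi> x) = 1"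
    using pd by (auto simp: prob_dist_def)
  have ne: "S \<noteq> {}" using psum by auto
  define Q where "Q = mpow S P N"
  define E where "E = (\<lambda>(x,y). Q x y) ` (S \<times> S)"
  have Efin: "finite E" "E \<noteq> {}" using fin ne by (auto simp: E_def)
  define \<delta> where "\<delta> = Min E"
  have dpos: "\<delta> > 0" using Efin pos by (auto simp: \<delta>_def E_def Q_def)
  have dle: "\<And>x y. x \<in> S \<Longrightarrow> y \<in> S \<Longrightarrow> Q x y \<ge> \<delta>"
    unfolding \<delta>_def using Efin by (intro Min_le) (auto simp: E_def)
  have Qrs: "\<And>x. x \<in> S \<Longrightarrow> (\<Sum>y\<in>S. Q x y) = 1"
    unfolding Q_def by (rule mpow_rowsum[OF fin rs])
  define \<beta> where "\<beta> = 1 - card S * \<delta>"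
  obtain x0 where x0: "x0 \<in> S" using ne by auto
  have "card S * \<delta> = (\<Sum>y\<in>S. \<delta>)" by simp
  also have "\<dots> \<le> (\<Sum>y\<in>S. Q x0 y)" using dle x0 by (intro sum_mono) auto
  finally have b0: "\<beta> \<ge> 0" using Qrs[OF x0] by (simp add: \<beta>_def)
  have cpos: "card S > 0" using fin ne by (simp add: card_gt_0_iff)
  have b1: "\<beta> < 1" using dpos cpos by (simp add: \<beta>_def)
  define d where "d = (\<lambda>m x. \<Sum>y\<in>S. \<bar>mpow S P m x y - \<pi> y\<bar>)"
  have dstep: "d (m + N) x \<le> \<beta> * d m x" if x: "x \<in> S" for m x
  proof -
    define v where "v = (\<lambda>z. mpow S P m x z - \<pi> z)"
    have "(\<Sum>z\<in>S. v z) = 0" using mpow_rowsum[OF fin rs x] psum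
      by (simp add: v_def sum_subtractf)
    have eq: "(\<Sum>z\<in>S. v z * Q z y) = mpow S P (m + N) x y - \<pi> y" if y: "y \<in> S" for y
    proof -
      have "(\<Sum>z\<in>S. v z * Q z y) = (\<Sum>z\<in>S. mpow S P m x z * Q z y) - (\<Sum>z\<in>S. \<pi> z * Q z y)"
        by (simp add: v_def algebra_simps sum_subtractf)
      also have "\<dots> = mpow S P (m + N) x y - \<pi> y"
        using mpow_add[OF fin y, of P m N x] mpow_stat[OF fin st y, of N] by (simp add: Q_def)
      finally show ?thesis .
    qed
    have "(\<Sum>y\<in>S. \<bar>\<Sum>z\<in>S. v z * Q z y\<bar>) \<le> \<beta> * (\<Sum>z\<in>S. \<bar>v z\<bar>)"
      unfolding \<beta>_def using contraction[OF fin _ dle Qrs \<open>(\<Sum>z\<in>S. v z) = 0\<close>] dpos by simp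
    then show ?thesis using eq by (simp add: d_def v_def)
  qed
  have d2: "d m x \<le> 2" if x: "x \<in> S" for m x
  proof -
    have "d m x \<le> (\<Sum>y\<in>S. \<bar>mpow S P m x y\<bar> + \<bar>\<pi> y\<bar>)"
      unfolding d_def by (intro sum_mono) auto
    also have "\<dots> = (\<Sum>y\<in>S. mpow S P m x y) + (\<Sum>y\<in>S. \<pi> y)"
      using mpow_nonneg[OF nn x] pnn by (simp add: sum.distrib)
    finally show ?thesis using mpow_rowsum[OF fin rs x] psum by simp
  qed
  have dk: "d (r + k * N) x \<le> 2 * \<beta> ^ k" if x: "x \<in> S" for r k x
  proof (induction k)
    case 0 then show ?case using d2[OF x] by simp
  next
    case (Suc k)
    have "d (r + Suc k * N) x = d ((r + k * N) + N) x" by (simp add: algebra_simps)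
    also have "\<dots> \<le> \<beta> * d (r + k * N) x" by (rule dstep[OF x])
    also have "\<dots> \<le> \<beta> * (2 * \<beta> ^ k)" using Suc b0 by (intro mult_left_mono) auto
    finally show ?case by simp
  qed
  define \<beta>' where "\<beta>' = max \<beta> (1/2)"
  have b'0: "\<beta>' > 0" and b'1: "\<beta>' < 1" using b1 by (auto simp: \<beta>'_def)
  define \<rho> where "\<rho> = root N \<beta>'"
  have r0: "\<rho> > 0" using b'0 N by (simp add: \<rho>_def)
  have r1: "\<rho> < 1" using b'1 b'0 N by (simp add: \<rho>_def)
  have rN: "\<rho> ^ N = \<beta>'" using b'0 N by (simp add: \<rho>_def)
  have tvle: "tv_dist S (mpow S P m x) \<pi> \<le> d m x" if x: "x \<in> S" for m x
    unfolding tv_dist_def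
  proof (subst Max_le_iff)
    show "finite ((\<lambda>A. \<bar>sum (mpow S P m x) A - sum \<pi> A\<bar>) ` Pow S)" using fin by simp
    show "(\<lambda>A. \<bar>sum (mpow S P m x) A - sum \<pi> A\<bar>) ` Pow S \<noteq> {}" by auto
    show "\<forall>a\<in>(\<lambda>A. \<bar>sum (mpow S P m x) A - sum \<pi> A\<bar>) ` Pow S. a \<le> d m x"
    proof
      fix a assume "a \<in> (\<lambda>A. \<bar>sum (mpow S P m x) A - sum \<pi> A\<bar>) ` Pow S"
      then obtain A where A: "A \<subseteq> S" "a = \<bar>sum (mpow S P m x) A - sum \<pi> A\<bar>" by auto
      have "a = \<bar>\<Sum>y\<in>A. mpow S P m x y - \<pi> y\<bar>" using A by (simp add: sum_subtractf)
      also have "\<dots> \<le> (\<Sum>y\<in>A. \<bar>mpow S P m x y - \<pi> y\<bar>)" by (rule sum_abs)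
      also have "\<dots> \<le> d m x" unfolding d_def using A fin by (intro sum_mono2) auto
      finally show "a \<le> d m x" .
    qed
  qed
  show ?thesis unfolding uniformly_ergodic_def
  proof (rule exI[of _ "2 / \<beta>'"], rule exI[of _ \<rho>], intro conjI ballI allI)
    show "0 < 2 / \<beta>'" using b'0 by simp
    show "0 \<le> \<rho>" using r0 by auto
    show "\<rho> < 1" using r1 by auto
    fix x m assume x: "x \<in> S"
    have mdec: "m = m mod N + (m div N) * N" by simp
    have "tv_dist S (mpow S P m x) \<pi> \<le> d m x" by (rule tvle[OF x])
    also have "\<dots> \<le> 2 * \<beta> ^ (m div N)" using dk[OF x, of "m mod N" "m div N"] by (simp only: mdec[symmetric])
    also have "\<dots> \<le> 2 * \<beta>' ^ (m div N)" using b0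
      by (intro mult_left_mono power_mono) (auto simp: \<beta>'_def)
    also have "\<dots> \<le> 2 / \<beta>' * \<rho> ^ m"
    proof -
      have "m \<le> N * (m div N) + N" using N
        using mult_div_mod_eq[of N m] mod_less_divisor[of N m] N by linarith
      hence "\<rho> ^ (N * (m div N) + N) \<le> \<rho> ^ m" using r0 r1 by (intro power_decreasing) auto
      also have "\<rho> ^ (N * (m div N) + N) = \<beta>' ^ (m div N) * \<beta>'"
        by (simp add: power_add power_mult rN)
      finally have "\<beta>' ^ (m div N) * \<beta>' \<le> \<rho> ^ m" .
      then show ?thesis using b'0 by (simp add: field_simps)
    qed
    finally show "tv_dist S (mpow S P m x) \<pi> \<le> 2 / \<beta>' * \<rho> ^ m" .
  qed
qed



lemma states_iff: "x \<in> states K n \<longleftrightarrow> (\<forall>i<n. x i \<in> {1..K}) \<and> (\<forall>i. n \<le> i \<longrightarrow> x i = undefined)"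
  by (auto simp: states_def PiE_iff extensional_def)

lemma states_upd: "x \<in> states K n \<Longrightarrow> i < n \<Longrightarrow> b \<in> {1..K} \<Longrightarrow> x(i := b) \<in> states K n"
  by (auto simp: states_iff)

lemma states_finite: "finite (states K n)"
  by (simp add: states_def finite_PiE)

lemma cnt_sum: "cnt n x k = (\<Sum>i<n. if x i = k then 1 else 0)"
  unfolding cnt_def by (simp add: sum.inter_filter[symmetric])

lemma cnt_total: "x \<in> states K n \<Longrightarrow> (\<Sum>k\<in>{1..K}. cnt n x k) = n"
proof -
  assume x: "x \<in> states K n"
  have "(\<Sum>k\<in>{1..K}. cnt n x k) = (\<Sum>i<n. \<Sum>k\<in>{1..K}. if x i = k then 1 else 0)"
    unfolding cnt_sum by (rule sum.swap)
  also have "\<dots> = (\<Sum>i<n. 1)"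
    using x by (intro sum.cong) (auto simp: states_iff)
  finally show ?thesis by simp
qed

lemma cnt_pos: "i < n \<Longrightarrow> x i = a \<Longrightarrow> cnt n x a \<ge> 1"
proof -
  assume h: "i < n" "x i = a"
  have "i \<in> {j \<in> {..<n}. x j = a}" using h by simp
  then have "{j \<in> {..<n}. x j = a} \<noteq> {}" by blast
  then have "card {j \<in> {..<n}. x j = a} > 0" by (simp add: card_gt_0_iff)
  then show ?thesis by (simp add: cnt_def)
qed

lemma cnt_upd_a: "i < n \<Longrightarrow> x i = a \<Longrightarrow> b \<noteq> a \<Longrightarrow> cnt n (x(i := b)) a = cnt n x a - 1"
proof -
  assume h: "i < n" "x i = a" "b \<noteq> a"
  have "{j \<in> {..<n}. (x(i := b)) j = a} = {j \<in> {..<n}. x j = a} - {i}" using h by auto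
  then show ?thesis unfolding cnt_def using h by (simp add: card_Diff_singleton)
qed

lemma cnt_upd_b: "i < n \<Longrightarrow> x i = a \<Longrightarrow> b \<noteq> a \<Longrightarrow> cnt n (x(i := b)) b = cnt n x b + 1"
proof -
  assume h: "i < n" "x i = a" "b \<noteq> a"
  have "{j \<in> {..<n}. (x(i := b)) j = b} = insert i {j \<in> {..<n}. x j = b}" using h by auto
  then show ?thesis unfolding cnt_def using h by simp
qed

lemma pairs_sum: "(\<Sum>(k, k')\<in>pairs K. a k + a k') = real (K - 1) * (\<Sum>k\<in>{1..K}. a k)"
proof (induction K)
  case 0
  then show ?case by (simp add: pairs_def)
next
  case (Suc K)
  have pe: "pairs (Suc K) = pairs K \<union> (\<lambda>k. (k, Suc K)) ` {1..K}"
    by (auto simp: pairs_def)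
  have disj: "pairs K \<inter> (\<lambda>k. (k, Suc K)) ` {1..K} = {}" by (auto simp: pairs_def)
  have fin: "finite (pairs K)"
    by (rule finite_subset[of _ "{1..K} \<times> {1..K}"]) (auto simp: pairs_def)
  have "(\<Sum>(k, k')\<in>pairs (Suc K). a k + a k') =
      (\<Sum>(k, k')\<in>pairs K. a k + a k') + (\<Sum>(k, k')\<in>(\<lambda>k. (k, Suc K)) ` {1..K}. a k + a k')"
    unfolding pe by (rule sum.union_disjoint[OF fin _ disj]) simp
  also have "(\<Sum>(k, k')\<in>(\<lambda>k. (k, Suc K)) ` {1..K}. a k + a k') = (\<Sum>k\<in>{1..K}. a k + a (Suc K))"
    by (subst sum.reindex) (auto simp: inj_on_def)
  finally show ?case using Suc
    by (cases K) (simp_all add: sum.distrib algebra_simps)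
qed

lemma core:
  fixes A B u w Z C :: real
  assumes "A \<ge> 1" "B \<ge> 1" "u \<ge> 0" "w \<ge> 0" "Z \<ge> 0"
  shows "u * (C * (1/2 * (1/A * min 1 (A/B * ((w/Z)/(u/Z)))))) = w * (C * (1/2 * (1/B * min 1 (B/A * ((u/Z)/(w/Z))))))"
proof (cases "Z = 0 \<or> u = 0 \<or> w = 0")
  case True
  then show ?thesis by auto
next
  case False
  then have pos: "Z > 0" "u > 0" "w > 0" "A > 0" "B > 0" using assms by auto
  have e1: "(w/Z)/(u/Z) = w/u" "(u/Z)/(w/Z) = u/w" using pos by (auto simp: field_simps)
  have l: "u * (1/A * min 1 (A/B * (w/u))) = min (u/A) (w/B)"
    using pos by (auto simp: min_def field_simps)
  have r: "w * (1/B * min 1 (B/A * (u/w))) = min (u/A) (w/B)"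
    using pos by (auto simp: min_def field_simps)
  have "u * (C * (1/2 * (1/A * min 1 (A/B * (w/u))))) = C/2 * (u * (1/A * min 1 (A/B * (w/u))))" by (simp add: algebra_simps)
  also have "\<dots> = C/2 * (w * (1/B * min 1 (B/A * (u/w))))" using l r by simp
  also have "\<dots> = w * (C * (1/2 * (1/B * min 1 (B/A * (u/w)))))" by (simp add: algebra_simps)
  finally show ?thesis using e1 by simp
qed

context
  fixes K n :: nat and \<pi> :: "config \<Rightarrow> real"
  assumes K2: "K \<ge> 2" and n1: "n \<ge> 1" and pd: "prob_dist (states K n) \<pi>"
begin

lemma pnn: "x \<in> states K n \<Longrightarrow> \<pi> x \<ge> 0"
  using pd by (auto simp: prob_dist_def)

lemma Z_nonneg: "x \<in> states K n \<Longrightarrow> i < n \<Longrightarrow> (\<Sum>j\<in>{1..K}. \<pi> (x(i := j))) \<ge> 0"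
  by (intro sum_nonneg pnn states_upd) auto

lemma cp_nonneg: "x \<in> states K n \<Longrightarrow> i < n \<Longrightarrow> k \<in> {1..K} \<Longrightarrow> cond_prob K \<pi> x i k \<ge> 0"
  unfolding cond_prob_def using Z_nonneg pnn states_upd by auto

lemma ratio_nonneg: "x \<in> states K n \<Longrightarrow> i < n \<Longrightarrow> km \<in> {1..K} \<Longrightarrow> kp \<in> {1..K} \<Longrightarrow> ratio K n \<pi> x i km kp \<ge> 0"
  unfolding ratio_def using cp_nonneg by auto

lemma mp_nonneg: "x \<in> states K n \<Longrightarrow> km \<in> {1..K} \<Longrightarrow> kp \<in> {1..K} \<Longrightarrow> move_prob K n \<pi> x km kp y \<ge> 0"
  unfolding move_prob_def using ratio_nonneg
  by (auto intro!: sum_nonneg add_nonneg_nonneg mult_nonneg_nonneg)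

lemma pairs_in: "p \<in> pairs K \<Longrightarrow> fst p \<in> {1..K} \<and> snd p \<in> {1..K}"
  by (auto simp: pairs_def)

lemma pairs_finite: "finite (pairs K)"
  by (rule finite_subset[of _ "{1..K} \<times> {1..K}"]) (auto simp: pairs_def)

lemma PR_nonneg: "x \<in> states K n \<Longrightarrow> PR K n \<pi> x y \<ge> 0"
  unfolding PR_def
proof (intro sum_nonneg)
  fix p assume x: "x \<in> states K n" and p: "p \<in> pairs K"
  obtain k k' where pk: "p = (k, k')" by force
  have kk: "k \<in> {1..K}" "k' \<in> {1..K}" using pairs_in[OF p] pk by auto
  have "pc K n x k k' \<ge> 0" using K2 by (simp add: pc_def)
  then show "0 \<le> (case p of (k, k') \<Rightarrow> pc K n x k k' * (1/2 * move_prob K n \<pi> x k k' y + 1/2 * move_prob K n \<pi> x k' k y))"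
    using mp_nonneg[OF x kk] mp_nonneg[OF x kk(2,1)] pk by simp
qed

lemma mp_rowsum: "x \<in> states K n \<Longrightarrow> kp \<in> {1..K} \<Longrightarrow> (\<Sum>y\<in>states K n. move_prob K n \<pi> x km kp y) = 1"
proof -
  assume x: "x \<in> states K n" and kp: "kp \<in> {1..K}"
  show ?thesis
  proof (cases "cnt n x km = 0")
    case True
    then show ?thesis using x states_finite by (simp add: move_prob_def sum.delta')
  next
    case False
    let ?I = "{i \<in> {..<n}. x i = km}"
    have "(\<Sum>y\<in>states K n. move_prob K n \<pi> x km kp y) =
       (\<Sum>i\<in>?I. \<Sum>y\<in>states K n. (1 / real (cnt n x km)) *
              (min 1 (ratio K n \<pi> x i km kp) * (if y = x(i := kp) then 1 else 0)
               + (1 - min 1 (ratio K n \<pi> x i km kp)) * (if y = x then 1 else 0)))"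
      using False unfolding move_prob_def by (simp only: if_False simp_thms) (rule sum.swap)
    also have "\<dots> = (\<Sum>i\<in>?I. 1 / real (cnt n x km))"
    proof (intro sum.cong refl)
      fix i assume i: "i \<in> ?I"
      have u: "x(i := kp) \<in> states K n" using i kp x by (intro states_upd) auto
      show "(\<Sum>y\<in>states K n. (1 / real (cnt n x km)) *
              (min 1 (ratio K n \<pi> x i km kp) * (if y = x(i := kp) then 1 else 0)
               + (1 - min 1 (ratio K n \<pi> x i km kp)) * (if y = x then 1 else 0))) = 1 / real (cnt n x km)"
      proof -
        let ?c = "1 / real (cnt n x km)" and ?m = "min 1 (ratio K n \<pi> x i km kp)"
        have "(\<Sum>y\<in>states K n. ?c * (?m * (if y = x(i := kp) then 1 else 0) + (1 - ?m) * (if y = x then 1 else 0)))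
           = (\<Sum>y\<in>states K n. (if y = x(i := kp) then ?c * ?m else 0) + (if y = x then ?c * (1 - ?m) else 0))"
          by (intro sum.cong refl) (auto simp: algebra_simps)
        also have "\<dots> = ?c * ?m + ?c * (1 - ?m)"
          using u x states_finite by (simp add: sum.distrib sum.delta')
        also have "\<dots> = ?c" by (simp add: algebra_simps)
        finally show ?thesis .
      qed
    qed
    also have "\<dots> = 1" using False by (simp add: cnt_def)
    finally show ?thesis .
  qed
qed

lemma PR_rowsum: "x \<in> states K n \<Longrightarrow> (\<Sum>y\<in>states K n. PR K n \<pi> x y) = 1"
proof -
  assume x: "x \<in> states K n"
  have "(\<Sum>y\<in>states K n. PR K n \<pi> x y) = (\<Sum>(k, k')\<in>pairs K. \<Sum>y\<in>states K n. pc K n x k k' *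
        (1/2 * move_prob K n \<pi> x k k' y + 1/2 * move_prob K n \<pi> x k' k y))"
    unfolding PR_def by (subst sum.swap) (simp add: case_prod_beta)
  also have "\<dots> = (\<Sum>(k, k')\<in>pairs K. pc K n x k k')"
  proof (intro sum.cong refl)
    fix p assume p: "p \<in> pairs K"
    obtain k k' where pk: "p = (k, k')" by force
    have kk: "k \<in> {1..K}" "k' \<in> {1..K}" using pairs_in[OF p] pk by auto
    have "(\<Sum>y\<in>states K n. pc K n x k k' * (1/2 * move_prob K n \<pi> x k k' y + 1/2 * move_prob K n \<pi> x k' k y))
       = pc K n x k k' * (1/2 * (\<Sum>y\<in>states K n. move_prob K n \<pi> x k k' y) + 1/2 * (\<Sum>y\<in>states K n. move_prob K n \<pi> x k' k y))"
      by (simp add: sum_distrib_left[symmetric] sum.distrib sum_divide_distrib)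
    also have "\<dots> = pc K n x k k'" using mp_rowsum[OF x kk(2)] mp_rowsum[OF x kk(1)] by simp
    finally show "(case p of (k, k') \<Rightarrow> \<Sum>y\<in>states K n. pc K n x k k' * (1/2 * move_prob K n \<pi> x k k' y + 1/2 * move_prob K n \<pi> x k' k y))
        = (case p of (k, k') \<Rightarrow> pc K n x k k')" using pk by simp
  qed
  also have "\<dots> = (\<Sum>(k, k')\<in>pairs K. real (cnt n x k) + real (cnt n x k')) / (real (K - 1) * real n)"
    unfolding pc_def by (simp add: sum_divide_distrib case_prod_beta)
  also have "\<dots> = 1"
    using pairs_sum[of "\<lambda>k. real (cnt n x k)" K] cnt_total[OF x] K2 n1
    by (simp del: of_nat_sum add: of_nat_sum[symmetric])
  finally show ?thesis .
qed


lemma mp_zero: "y \<noteq> x \<Longrightarrow> move_prob K n \<pi> x km kp y \<noteq> 0 \<Longrightarrow> \<exists>j<n. x j = km \<and> y = x(j := kp)"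
proof (rule ccontr)
  assume h: "y \<noteq> x" "move_prob K n \<pi> x km kp y \<noteq> 0" "\<not> (\<exists>j<n. x j = km \<and> y = x(j := kp))"
  have "move_prob K n \<pi> x km kp y = 0"
    unfolding move_prob_def using h(1,3) by (auto intro!: sum.neutral)
  then show False using h(2) by simp
qed

lemma mp_single:
  assumes "i < n" "x i = a" "b \<noteq> a"
  shows "move_prob K n \<pi> x a b (x(i := b)) = 1 / real (cnt n x a) * min 1 (ratio K n \<pi> x i a b)"
proof -
  have c: "cnt n x a \<noteq> 0" using cnt_pos[of i n x a, OF assms(1,2)] by simp
  have ne: "x(i := b) \<noteq> x" using assms by (metis fun_upd_same)
  let ?I = "{j \<in> {..<n}. x j = a}"
  have "move_prob K n \<pi> x a b (x(i := b)) = (\<Sum>j\<in>?I. 1 / real (cnt n x a) *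
              (min 1 (ratio K n \<pi> x j a b) * (if x(i := b) = x(j := b) then 1 else 0)
               + (1 - min 1 (ratio K n \<pi> x j a b)) * (if x(i := b) = x then 1 else 0)))"
    unfolding move_prob_def using c by simp
  also have "\<dots> = (\<Sum>j\<in>?I. if j = i then 1 / real (cnt n x a) * min 1 (ratio K n \<pi> x i a b) else 0)"
  proof (intro sum.cong refl)
    fix j assume j: "j \<in> ?I"
    have "x(i := b) = x(j := b) \<longleftrightarrow> j = i"
      using j assms by (metis (mono_tags, lifting) fun_upd_apply mem_Collect_eq)
    then show "1 / real (cnt n x a) * (min 1 (ratio K n \<pi> x j a b) * (if x(i := b) = x(j := b) then 1 else 0) +
          (1 - min 1 (ratio K n \<pi> x j a b)) * (if x(i := b) = x then 1 else 0)) =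
         (if j = i then 1 / real (cnt n x a) * min 1 (ratio K n \<pi> x i a b) else 0)"
      using ne by auto
  qed
  also have "\<dots> = 1 / real (cnt n x a) * min 1 (ratio K n \<pi> x i a b)"
    using assms by (simp add: sum.delta')
  finally show ?thesis .
qed

lemma mp_only:
  assumes "i < n" "x i = a" "b \<noteq> a" "u \<noteq> v" "move_prob K n \<pi> x u v (x(i := b)) \<noteq> 0"
  shows "u = a \<and> v = b"
proof -
  have ne: "x(i := b) \<noteq> x" using assms by (metis fun_upd_same)
  obtain j where j: "j < n" "x j = u" "x(i := b) = x(j := v)" using mp_zero[OF ne assms(5)] by blast
  have "j = i"
  proof (rule ccontr)
    assume "j \<noteq> i"
    then have "(x(i := b)) j = x j" by simp
    also have "(x(i := b)) j = v" using j(3) by simp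
    finally show False using j(2) assms(4) by simp
  qed
  then show ?thesis using j assms by (metis fun_upd_same)
qed

lemma PR_single:
  assumes x: "x \<in> states K n" and i: "i < n" and a: "x i = a" and b: "b \<in> {1..K}" "b \<noteq> a"
  shows "PR K n \<pi> x (x(i := b)) = real (cnt n x a + cnt n x b) / (real (K - 1) * real n) *
            (1/2 * (1 / real (cnt n x a) * min 1 (ratio K n \<pi> x i a b)))"
proof -
  let ?y = "x(i := b)"
  let ?M = "move_prob K n \<pi> x a b ?y"
  have aK: "a \<in> {1..K}" using x i a by (auto simp: states_iff)
  have mo: "move_prob K n \<pi> x u v ?y = (if u = a \<and> v = b then ?M else 0)" if "u \<noteq> v" for u v
    using mp_only[of i x a b u v, OF i a b(2) that] by auto
  have mm: "(min a b, max a b) \<in> pairs K" using aK b by (auto simp: pairs_def min_def max_def)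
  have "PR K n \<pi> x ?y = (\<Sum>p\<in>pairs K. if p = (min a b, max a b) then pc K n x (min a b) (max a b) * (1/2 * ?M) else 0)"
    unfolding PR_def
  proof (intro sum.cong refl)
    fix p assume p: "p \<in> pairs K"
    obtain k k' where pk: "p = (k, k')" by force
    have kk: "k < k'" using p pk by (auto simp: pairs_def)
    show "(case p of (k, k') \<Rightarrow> pc K n x k k' * (1/2 * move_prob K n \<pi> x k k' ?y + 1/2 * move_prob K n \<pi> x k' k ?y)) =
        (if p = (min a b, max a b) then pc K n x (min a b) (max a b) * (1/2 * ?M) else 0)"
      using pk kk mo[of k k'] mo[of k' k] b(2) by (auto simp: min_def max_def)
  qed
  also have "\<dots> = pc K n x (min a b) (max a b) * (1/2 * ?M)"
    using mm pairs_finite by (simp add: sum.delta')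
  also have "\<dots> = real (cnt n x a + cnt n x b) / (real (K - 1) * real n) *
            (1/2 * (1 / real (cnt n x a) * min 1 (ratio K n \<pi> x i a b)))"
  proof -
    have M: "?M = 1 / real (cnt n x a) * min 1 (ratio K n \<pi> x i a b)" by (rule mp_single[of i x a b, OF i a b(2)])
    have pcv: "pc K n x (min a b) (max a b) = real (cnt n x a + cnt n x b) / (real (K - 1) * real n)"
      by (auto simp: pc_def min_def max_def add.commute)
    show ?thesis by (simp only: M pcv)
  qed
  finally show ?thesis .
qed

lemma PR_far:
  assumes "y \<noteq> x" "\<not> (\<exists>i<n. y = x(i := y i))"
  shows "PR K n \<pi> x y = 0"
proof -
  have "move_prob K n \<pi> x u v y = 0" for u v
  proof (rule ccontr)
    assume "move_prob K n \<pi> x u v y \<noteq> 0"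
    then obtain j where "j < n" "y = x(j := v)" using mp_zero[OF assms(1)] by blast
    then show False using assms(2) by auto
  qed
  then show ?thesis unfolding PR_def by (simp add: case_prod_beta)
qed

lemma reversible_PR: "reversible (states K n) (PR K n \<pi>) \<pi>"
  unfolding reversible_def
proof (intro ballI)
  fix x y assume x: "x \<in> states K n" and y: "y \<in> states K n"
  show "\<pi> x * PR K n \<pi> x y = \<pi> y * PR K n \<pi> y x"
  proof (cases "y = x")
    case True then show ?thesis by simp
  next
    case ne: False
    show ?thesis
    proof (cases "\<exists>i<n. y = x(i := y i)")
      case False
      have "\<not> (\<exists>i<n. x = y(i := x i))"
      proof
        assume "\<exists>i<n. x = y(i := x i)"
        then obtain i where "i < n" "x = y(i := x i)" by blast
        then have "y = x(i := y i)" by (metis fun_upd_triv fun_upd_upd)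
        then show False using False \<open>i < n\<close> by blast
      qed
      then show ?thesis using PR_far[of y x] PR_far[of x y] ne False by auto
    next
      case True
      then obtain i where i: "i < n" and yx: "y = x(i := y i)" by blast
      define a where "a = x i"
      define b where "b = y i"
      have ba: "b \<noteq> a" using ne yx by (metis a_def b_def fun_upd_triv)
      have bK: "b \<in> {1..K}" "a \<in> {1..K}" using x y i by (auto simp: states_iff a_def b_def)
      have yb: "y = x(i := b)" using yx b_def by simp
      have xa: "x = y(i := a)" using yb a_def by simp
      have ca: "cnt n y a = cnt n x a - 1" using cnt_upd_a[of i n x a b, OF i a_def[symmetric] ba] yb by simp
      have cb: "cnt n y b = cnt n x b + 1" using cnt_upd_b[of i n x a b, OF i a_def[symmetric] ba] yb by simp
      have cxa: "cnt n x a \<ge> 1" using cnt_pos[of i n x a, OF i a_def[symmetric]] .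
      have P1: "PR K n \<pi> x y = real (cnt n x a + cnt n x b) / (real (K - 1) * real n) *
            (1/2 * (1 / real (cnt n x a) * min 1 (ratio K n \<pi> x i a b)))"
        using PR_single[OF x i a_def[symmetric] bK(1) ba] yb by simp
      define Z where "Z = (\<Sum>j\<in>{1..K}. \<pi> (x(i := j)))"
      have Zy: "(\<Sum>j\<in>{1..K}. \<pi> (y(i := j))) = Z" using yb by (simp add: Z_def)
      have r1: "ratio K n \<pi> x i a b = real (cnt n x a) / real (cnt n x b + 1) * ((\<pi> y / Z) / (\<pi> x / Z))"
        unfolding ratio_def cond_prob_def Z_def[symmetric] using yb a_def by simp
      have r2: "ratio K n \<pi> y i b a = real (cnt n x b + 1) / real (cnt n x a) * ((\<pi> x / Z) / (\<pi> y / Z))"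
        unfolding ratio_def cond_prob_def Zy using xa b_def ca cb cxa by (simp add: of_nat_diff)
      have P2: "PR K n \<pi> y x = real (cnt n x a + cnt n x b) / (real (K - 1) * real n) *
            (1/2 * (1 / real (cnt n x b + 1) * min 1 (real (cnt n x b + 1) / real (cnt n x a) * ((\<pi> x / Z) / (\<pi> y / Z)))))"
      proof -
        have "PR K n \<pi> y x = real (cnt n y b + cnt n y a) / (real (K - 1) * real n) *
            (1/2 * (1 / real (cnt n y b) * min 1 (ratio K n \<pi> y i b a)))"
          using PR_single[OF y i b_def[symmetric] bK(2) ba[symmetric]] xa by simp
        moreover have "cnt n y b + cnt n y a = cnt n x a + cnt n x b" using ca cb cxa by simp
        ultimately show ?thesis using r2 cb by simp
      qed
      have P1': "PR K n \<pi> x y = real (cnt n x a + cnt n x b) / (real (K - 1) * real n) *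
            (1/2 * (1 / real (cnt n x a) * min 1 (real (cnt n x a) / real (cnt n x b + 1) * ((\<pi> y / Z) / (\<pi> x / Z)))))"
        using P1 r1 by simp
      have Z0: "Z \<ge> 0" unfolding Z_def using Z_nonneg[OF x i] .
      show ?thesis
        unfolding P1' P2
        by (rule core) (use cxa pnn[OF x] pnn[OF y] Z0 in auto)
    qed
  qed
qed

lemma PR_pos:
  assumes pos: "\<forall>c\<in>states K n. \<pi> c > 0" and x: "x \<in> states K n" and i: "i < n"
    and b: "b \<in> {1..K}" "b \<noteq> x i"
  shows "PR K n \<pi> x (x(i := b)) > 0"
proof -
  define a where "a = x i"
  have cxa: "cnt n x a \<ge> 1" using cnt_pos[of i n x a, OF i a_def[symmetric]] .
  define Z where "Z = (\<Sum>j\<in>{1..K}. \<pi> (x(i := j)))"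
  have Zp: "Z > 0" unfolding Z_def using K2 pos states_upd[OF x i]
    by (intro sum_pos) auto
  have py: "\<pi> (x(i := b)) > 0" using pos states_upd[OF x i b(1)] by simp
  have px: "\<pi> x > 0" using pos x by simp
  have "ratio K n \<pi> x i a b = real (cnt n x a) / real (cnt n x b + 1) * ((\<pi> (x(i := b)) / Z) / (\<pi> x / Z))"
    unfolding ratio_def cond_prob_def Z_def[symmetric] using a_def by simp
  also have "\<dots> > 0" using cxa Zp py px by (intro mult_pos_pos divide_pos_pos) auto
  finally have rp: "ratio K n \<pi> x i a b > 0" .
  have "PR K n \<pi> x (x(i := b)) = real (cnt n x a + cnt n x b) / (real (K - 1) * real n) *
            (1/2 * (1 / real (cnt n x a) * min 1 (ratio K n \<pi> x i a b)))"
    using PR_single[OF x i a_def[symmetric] b(1)] b(2) a_def by simp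
  also have "\<dots> > 0" using cxa rp K2 n1 by (intro mult_pos_pos divide_pos_pos) auto
  finally show ?thesis .
qed


definition c0 :: "nat \<Rightarrow> config" where "c0 m = (\<lambda>i. if i < m then 1 else undefined)"

lemma c0_in: "c0 n \<in> states K n"
  using K2 by (auto simp: states_iff c0_def)

lemma PR_stat: "y \<in> states K n \<Longrightarrow> (\<Sum>x\<in>states K n. \<pi> x * PR K n \<pi> x y) = \<pi> y"
proof -
  assume y: "y \<in> states K n"
  have "(\<Sum>x\<in>states K n. \<pi> x * PR K n \<pi> x y) = (\<Sum>x\<in>states K n. \<pi> y * PR K n \<pi> y x)"
    using reversible_PR y by (intro sum.cong refl) (auto simp: reversible_def)
  also have "\<dots> = \<pi> y" using PR_rowsum[OF y] by (simp add: sum_distrib_left[symmetric])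
  finally show ?thesis .
qed

lemma mpow_nn: "x \<in> states K n \<Longrightarrow> y \<in> states K n \<Longrightarrow> mpow (states K n) (PR K n \<pi>) m x y \<ge> 0"
  by (rule mpow_nonneg) (auto intro: PR_nonneg)

lemma mpow_left: "y \<in> states K n \<Longrightarrow> x \<in> states K n \<Longrightarrow>
   mpow (states K n) (PR K n \<pi>) (Suc k) x y = (\<Sum>z\<in>states K n. PR K n \<pi> x z * mpow (states K n) (PR K n \<pi>) k z y)"
proof -
  assume y: "y \<in> states K n" and x: "x \<in> states K n"
  have "mpow (states K n) (PR K n \<pi>) (1 + k) x y = (\<Sum>z\<in>states K n. mpow (states K n) (PR K n \<pi>) 1 x z * mpow (states K n) (PR K n \<pi>) k z y)"
    by (rule mpow_add[OF states_finite y])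
  also have "\<dots> = (\<Sum>z\<in>states K n. PR K n \<pi> x z * mpow (states K n) (PR K n \<pi>) k z y)"
  proof (intro sum.cong refl)
    fix z assume "z \<in> states K n"
    have "(\<Sum>w\<in>states K n. (if x = w then 1 else 0) * PR K n \<pi> w z) = (\<Sum>w\<in>states K n. if x = w then PR K n \<pi> w z else 0)"
      by (intro sum.cong) auto
    also have "\<dots> = PR K n \<pi> x z" using x states_finite by simp
    finally show "mpow (states K n) (PR K n \<pi>) 1 x z * mpow (states K n) (PR K n \<pi>) k z y = PR K n \<pi> x z * mpow (states K n) (PR K n \<pi>) k z y"
      by simp
  qed
  finally show ?thesis by simp
qed

context
  assumes pos: "\<forall>c\<in>states K n. \<pi> c > 0"
begin

lemma loop_c0: "PR K n \<pi> (c0 n) (c0 n) > 0"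
proof -
  have p12: "(1, 2) \<in> pairs K" using K2 by (auto simp: pairs_def)
  have cnt2: "cnt n (c0 n) 2 = 0" by (simp add: cnt_def c0_def)
  have cnt1: "cnt n (c0 n) 1 = n" by (simp add: cnt_def c0_def)
  have mp: "move_prob K n \<pi> (c0 n) 2 1 (c0 n) = 1" using cnt2 by (simp add: move_prob_def)
  let ?f = "\<lambda>p. case p of (k, k') \<Rightarrow> pc K n (c0 n) k k' * (1/2 * move_prob K n \<pi> (c0 n) k k' (c0 n) + 1/2 * move_prob K n \<pi> (c0 n) k' k (c0 n))"
  have nn: "?f p \<ge> 0" if "p \<in> pairs K" for p
  proof -
    obtain k k' where pk: "p = (k, k')" by force
    have kk: "k \<in> {1..K}" "k' \<in> {1..K}" using pairs_in[OF that] pk by auto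
    have "pc K n (c0 n) k k' \<ge> 0" using K2 by (simp add: pc_def)
    then show ?thesis using mp_nonneg[OF c0_in kk] mp_nonneg[OF c0_in kk(2,1)] pk by simp
  qed
  have "?f (1, 2) > 0"
  proof -
    have "pc K n (c0 n) 1 2 > 0" using K2 n1 cnt1 cnt2 by (simp add: pc_def)
    moreover have "move_prob K n \<pi> (c0 n) 1 2 (c0 n) \<ge> 0" using mp_nonneg[OF c0_in, of 1 2] K2 by simp
    ultimately show ?thesis using mp by (simp add: add_pos_nonneg)
  qed
  also have "?f (1, 2) \<le> sum ?f (pairs K)" by (rule member_le_sum[OF p12 _ pairs_finite]) (use nn in auto)
  finally show ?thesis unfolding PR_def by simp
qed

lemma reach_to: "x \<in> states K n \<Longrightarrow> card {i \<in> {..<n}. x i \<noteq> 1} \<le> k \<Longrightarrow> mpow (states K n) (PR K n \<pi>) k x (c0 n) > 0"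
proof (induction k arbitrary: x)
  case 0
  have "{i \<in> {..<n}. x i \<noteq> 1} = {}" using 0 by simp
  then have "x = c0 n" using 0(1) by (auto simp: c0_def states_iff fun_eq_iff)
  then show ?case by simp
next
  case (Suc k)
  note x = Suc.prems(1)
  show ?case
  proof (cases "x = c0 n")
    case True
    have "mpow (states K n) (PR K n \<pi>) (Suc k) x (c0 n) = (\<Sum>z\<in>states K n. mpow (states K n) (PR K n \<pi>) k x z * PR K n \<pi> z (c0 n))"
      by simp
    also have "\<dots> \<ge> mpow (states K n) (PR K n \<pi>) k x (c0 n) * PR K n \<pi> (c0 n) (c0 n)"
      using states_finite c0_in x
      by (intro member_le_sum[where f="\<lambda>z. mpow (states K n) (PR K n \<pi>) k x z * PR K n \<pi> z (c0 n)"])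
         (auto intro!: mult_nonneg_nonneg mpow_nn PR_nonneg simp del: mpow.simps)
    moreover have "mpow (states K n) (PR K n \<pi>) k x (c0 n) * PR K n \<pi> (c0 n) (c0 n) > 0"
      using Suc.IH[OF x] True loop_c0 by (simp add: c0_def)
    ultimately show ?thesis by linarith
  next
    case False
    have "\<exists>i<n. x i \<noteq> 1"
    proof (rule ccontr)
      assume "\<not> (\<exists>i<n. x i \<noteq> 1)"
      then have "x = c0 n" using x unfolding c0_def fun_eq_iff states_iff by auto
      then show False using False by simp
    qed
    then obtain i where i: "i < n" "x i \<noteq> 1" by blast
    define x' where "x' = x(i := 1)"
    have x': "x' \<in> states K n" using states_upd[OF x i(1)] K2 by (simp add: x'_def)
    have "{j \<in> {..<n}. x' j \<noteq> 1} = {j \<in> {..<n}. x j \<noteq> 1} - {i}" by (auto simp: x'_def)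
    then have "card {j \<in> {..<n}. x' j \<noteq> 1} \<le> k" using Suc.prems(2) i by (simp add: card_Diff_singleton)
    then have m: "mpow (states K n) (PR K n \<pi>) k x' (c0 n) > 0" using Suc.IH[OF x'] by simp
    have p: "PR K n \<pi> x x' > 0" unfolding x'_def using PR_pos[OF pos x i(1), of 1] i K2 by auto
    have "PR K n \<pi> x x' * mpow (states K n) (PR K n \<pi>) k x' (c0 n) \<le>
          (\<Sum>z\<in>states K n. PR K n \<pi> x z * mpow (states K n) (PR K n \<pi>) k z (c0 n))"
      using states_finite x' x c0_in
      by (intro member_le_sum[where f="\<lambda>z. PR K n \<pi> x z * mpow (states K n) (PR K n \<pi>) k z (c0 n)"])
         (auto intro!: mult_nonneg_nonneg mpow_nn PR_nonneg simp del: mpow.simps)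
    also have "\<dots> = mpow (states K n) (PR K n \<pi>) (Suc k) x (c0 n)" using mpow_left[OF c0_in x] by simp
    finally show ?thesis using m p by (smt (verit) mult_pos_pos)
  qed
qed

lemma reach_from: "y \<in> states K n \<Longrightarrow> card {i \<in> {..<n}. y i \<noteq> 1} \<le> k \<Longrightarrow> mpow (states K n) (PR K n \<pi>) k (c0 n) y > 0"
proof (induction k arbitrary: y)
  case 0
  have "{i \<in> {..<n}. y i \<noteq> 1} = {}" using 0 by simp
  then have "y = c0 n" using 0(1) by (auto simp: c0_def states_iff fun_eq_iff)
  then show ?case by simp
next
  case (Suc k)
  note y = Suc.prems(1)
  show ?case
  proof (cases "y = c0 n")
    case True
    have "mpow (states K n) (PR K n \<pi>) (Suc k) (c0 n) y = (\<Sum>z\<in>states K n. mpow (states K n) (PR K n \<pi>) k (c0 n) z * PR K n \<pi> z y)"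
      by simp
    also have "\<dots> \<ge> mpow (states K n) (PR K n \<pi>) k (c0 n) (c0 n) * PR K n \<pi> (c0 n) y"
      using states_finite c0_in y
      by (intro member_le_sum[where f="\<lambda>z. mpow (states K n) (PR K n \<pi>) k (c0 n) z * PR K n \<pi> z y"])
         (auto intro!: mult_nonneg_nonneg mpow_nn PR_nonneg simp del: mpow.simps)
    moreover have "mpow (states K n) (PR K n \<pi>) k (c0 n) (c0 n) * PR K n \<pi> (c0 n) (c0 n) > 0"
      using Suc.IH[OF c0_in] loop_c0 by (simp add: c0_def)
    ultimately show ?thesis using True by simp
  next
    case False
    have "\<exists>i<n. y i \<noteq> 1"
    proof (rule ccontr)
      assume "\<not> (\<exists>i<n. y i \<noteq> 1)"
      then have "y = c0 n" using y unfolding c0_def fun_eq_iff states_iff by auto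
      then show False using False by simp
    qed
    then obtain i where i: "i < n" "y i \<noteq> 1" by blast
    define y' where "y' = y(i := 1)"
    have y': "y' \<in> states K n" using states_upd[OF y i(1)] K2 by (simp add: y'_def)
    have "{j \<in> {..<n}. y' j \<noteq> 1} = {j \<in> {..<n}. y j \<noteq> 1} - {i}" by (auto simp: y'_def)
    then have "card {j \<in> {..<n}. y' j \<noteq> 1} \<le> k" using Suc.prems(2) i by (simp add: card_Diff_singleton)
    then have m: "mpow (states K n) (PR K n \<pi>) k (c0 n) y' > 0" using Suc.IH[OF y'] by simp
    have yy: "y = y'(i := y i)" by (simp add: y'_def)
    have yK: "y i \<in> {1..K}" using y i by (auto simp: states_iff)
    have p: "PR K n \<pi> y' y > 0" using PR_pos[OF pos y' i(1) yK] i yy by (simp add: y'_def)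
    have "mpow (states K n) (PR K n \<pi>) k (c0 n) y' * PR K n \<pi> y' y \<le>
          (\<Sum>z\<in>states K n. mpow (states K n) (PR K n \<pi>) k (c0 n) z * PR K n \<pi> z y)"
      using states_finite y' y c0_in
      by (intro member_le_sum[where f="\<lambda>z. mpow (states K n) (PR K n \<pi>) k (c0 n) z * PR K n \<pi> z y"])
         (auto intro!: mult_nonneg_nonneg mpow_nn PR_nonneg simp del: mpow.simps)
    also have "\<dots> = mpow (states K n) (PR K n \<pi>) (Suc k) (c0 n) y" by simp
    finally show ?thesis using m p by (smt (verit) mult_pos_pos)
  qed
qed

lemma card_le_n: "card {i \<in> {..<n}. x i \<noteq> (1::nat)} \<le> n"
  by (rule order_trans[OF card_mono[of "{..<n}"]]) auto

lemma mpow_2n: "x \<in> states K n \<Longrightarrow> y \<in> states K n \<Longrightarrow> mpow (states K n) (PR K n \<pi>) (n + n) x y > 0"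
proof -
  assume x: "x \<in> states K n" and y: "y \<in> states K n"
  have a: "mpow (states K n) (PR K n \<pi>) n x (c0 n) > 0" by (rule reach_to[OF x card_le_n])
  have b: "mpow (states K n) (PR K n \<pi>) n (c0 n) y > 0" by (rule reach_from[OF y card_le_n])
  have "mpow (states K n) (PR K n \<pi>) n x (c0 n) * mpow (states K n) (PR K n \<pi>) n (c0 n) y \<le>
        (\<Sum>z\<in>states K n. mpow (states K n) (PR K n \<pi>) n x z * mpow (states K n) (PR K n \<pi>) n z y)"
    using states_finite x y c0_in
    by (intro member_le_sum[where f="\<lambda>z. mpow (states K n) (PR K n \<pi>) n x z * mpow (states K n) (PR K n \<pi>) n z y"])
       (auto intro!: mult_nonneg_nonneg mpow_nn simp del: mpow.simps)
  also have "\<dots> = mpow (states K n) (PR K n \<pi>) (n + n) x y" using mpow_add[OF states_finite y] by simp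
  finally show ?thesis using a b by (smt (verit) mult_pos_pos)
qed

lemma mpow_2n1: "x \<in> states K n \<Longrightarrow> mpow (states K n) (PR K n \<pi>) (n + Suc n) x x > 0"
proof -
  assume x: "x \<in> states K n"
  have a: "mpow (states K n) (PR K n \<pi>) n x (c0 n) > 0" by (rule reach_to[OF x card_le_n])
  have b: "mpow (states K n) (PR K n \<pi>) n (c0 n) x > 0" by (rule reach_from[OF x card_le_n])
  have "PR K n \<pi> (c0 n) (c0 n) * mpow (states K n) (PR K n \<pi>) n (c0 n) x \<le>
        (\<Sum>z\<in>states K n. PR K n \<pi> (c0 n) z * mpow (states K n) (PR K n \<pi>) n z x)"
    using states_finite x c0_in
    by (intro member_le_sum[where f="\<lambda>z. PR K n \<pi> (c0 n) z * mpow (states K n) (PR K n \<pi>) n z x"])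
       (auto intro!: mult_nonneg_nonneg mpow_nn PR_nonneg simp del: mpow.simps)
  also have "\<dots> = mpow (states K n) (PR K n \<pi>) (Suc n) (c0 n) x" using mpow_left[OF x c0_in] by simp
  finally have b': "mpow (states K n) (PR K n \<pi>) (Suc n) (c0 n) x > 0" using b loop_c0 by (smt (verit) mult_pos_pos)
  have "mpow (states K n) (PR K n \<pi>) n x (c0 n) * mpow (states K n) (PR K n \<pi>) (Suc n) (c0 n) x \<le>
        (\<Sum>z\<in>states K n. mpow (states K n) (PR K n \<pi>) n x z * mpow (states K n) (PR K n \<pi>) (Suc n) z x)"
    using states_finite x c0_in
    by (intro member_le_sum[where f="\<lambda>z. mpow (states K n) (PR K n \<pi>) n x z * mpow (states K n) (PR K n \<pi>) (Suc n) z x"])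
       (auto intro!: mult_nonneg_nonneg mpow_nn simp del: mpow.simps)
  also have "\<dots> = mpow (states K n) (PR K n \<pi>) (n + Suc n) x x" by (rule mpow_add[OF states_finite x, symmetric])
  finally show ?thesis using a b' by (smt (verit) mult_pos_pos)
qed

lemma irred: "irreducible_chain (states K n) (PR K n \<pi>)"
  unfolding irreducible_chain_def using mpow_2n by blast

lemma aperiodic: "aperiodic_chain (states K n) (PR K n \<pi>)"
  unfolding aperiodic_chain_def period_def
proof
  fix x assume x: "x \<in> states K n"
  let ?A = "{m. 1 \<le> m \<and> mpow (states K n) (PR K n \<pi>) m x x > 0}"
  have "n + n \<in> ?A" using mpow_2n[OF x x] n1 by simp
  moreover have "n + Suc n \<in> ?A" using mpow_2n1[OF x] by simp
  ultimately have "Gcd ?A dvd n + n" "Gcd ?A dvd Suc (n + n)" by (auto intro: Gcd_dvd)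
  then have "Gcd ?A dvd 1" by (metis add_Suc_right dvd_add_right_iff plus_1_eq_Suc add.commute)
  then show "Gcd ?A = 1" by simp
qed

lemma uerg: "uniformly_ergodic (states K n) (PR K n \<pi>) \<pi>"
  by (rule unif_erg_abstract[OF states_finite _ PR_rowsum pd PR_stat, of "n + n"])
     (use PR_nonneg mpow_2n n1 in auto)

end

end

theorem lemma1:
  fixes K n :: nat and \<pi> :: "config \<Rightarrow> real"
  assumes "K \<ge> 2" and "n \<ge> 1"
    and "prob_dist (states K n) \<pi>"
  shows "reversible (states K n) (PR K n \<pi>) \<pi> \<and>
         ((\<forall>c\<in>states K n. \<pi> c > 0) \<longrightarrow>
            irreducible_chain (states K n) (PR K n \<pi>) \<and>
            aperiodic_chain (states K n) (PR K n \<pi>) \<and>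
            uniformly_ergodic (states K n) (PR K n \<pi>) \<pi>)"
  using reversible_PR[OF assms] irred[OF assms] aperiodic[OF assms] uerg[OF assms] by blast

end
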